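(* Let $A\in\mathcal{O}(\mathrm{S}^2_q)$ act on $\mathcal{H}$ via the Dąbrowski–Sitarz representation and let $M:=L^2K^2$. Then the operator $A_0:=(A-M)L^{-1}$, defined on the span of the basis vectors, extends to a bounded operator on $\mathcal{H}$; i.e. there is a bounded operator $A_0$ with $A=M+A_0L$.
   Context: Fix $q\in(0,1)$, $[n]_q=(q^n-q^{-n})/(q-q^{-1})$. $\mathcal{H}=\mathcal{H}_-\oplus\mathcal{H}_+$ has orthonormal basis $v^l_{k,\pm}\in\mathcal{H}_\pm$, $l\in\{\frac12,\frac32,\dots\}$, $k\in\{-l,\dots,l\}$; $Lv^l_{k,\pm}=q^lv^l_{k,\pm}$, $Kv^l_{k,\pm}=q^kv^l_{k,\pm}$. The generator $A$ of the Podleś sphere acts by $A=(1-x_0)/(1+q^2)$, where $x_0v^l_{k,\pm}=\alpha^-_0(l,k)_\pm v^{l-1}_{k,\pm}+\alpha^0_0(l,k)_\pm v^l_{k,\pm}+\alpha^+_0(l,k)_\pm v^{l+1}_{k,\pm}$ (with $v^{1/2-1}_{k,\pm}:=0$ and $\alpha^-_0(l,k)_\pm=0$ when $|k|>l-1$), and $\alpha^-_0(l,k)_\pm=\frac{q^{k\pm1/2}[2]_q[l-k]_q^{1/2}[l+k]_q^{1/2}[l-1/2]_q^{1/2}[l+1/2]_q^{1/2}}{[2l-1]_q^{1/2}[2l]_q[2l+1]_q^{1/2}}$, $\alpha^+_0(l,k)_\pm=\alpha^-_0(l+1,k)_\pm$, $\alpha^0_0(l,k)_\pm=[2l]_q^{-1}([l-k+1]_q[l+k]_q-q^2[l-k]_q[l+k+1]_q)\beta_\pm(l)$,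 with $\beta_\pm(l)=\frac{\pm q^{\mp1}+(q-q^{-1})([1/2]_q[3/2]_q-[l]_q[l+1]_q)}{q[2l+2]_q}$. *)

theory Defs
  imports Complex_Main
begin

text \<open>Basis index (s, l, k) of v^l_{k,s}: s = True for the '+' summand, False for '-'.\<close>
type_synonym idx = "bool \<times> real \<times> real"

definition valid_idx :: "idx \<Rightarrow> bool" where
  "valid_idx i = (case i of (s, l, k) \<Rightarrow>
     (\<exists>n::nat. l = real n + 1/2) \<and> (\<exists>m::int. k = real_of_int m + 1/2) \<and> \<bar>k\<bar> \<le> l)"

definition lev :: "idx \<Rightarrow> real" where "lev i = fst (snd i)"

definition qnum :: "real \<Rightarrow> real \<Rightarrow> real" where
  "qnum q x = (q powr x - q powr (-x)) / (q - 1/q)"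

definition sgn_of :: "bool \<Rightarrow> real" where "sgn_of s = (if s then 1 else -1)"

definition alpha_minus :: "real \<Rightarrow> bool \<Rightarrow> real \<Rightarrow> real \<Rightarrow> real" where
  "alpha_minus q s l k = (if \<bar>k\<bar> > l - 1 then 0 else
     q powr (k + sgn_of s / 2) * qnum q 2 * sqrt (qnum q (l - k)) * sqrt (qnum q (l + k))
       * sqrt (qnum q (l - 1/2)) * sqrt (qnum q (l + 1/2))
     / (sqrt (qnum q (2*l - 1)) * qnum q (2*l) * sqrt (qnum q (2*l + 1))))"

definition alpha_plus :: "real \<Rightarrow> bool \<Rightarrow> real \<Rightarrow> real \<Rightarrow> real" where
  "alpha_plus q s l k = alpha_minus q s (l + 1) k"

definition beta :: "real \<Rightarrow> bool \<Rightarrow> real \<Rightarrow> real" where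
  "beta q s l = (sgn_of s * q powr (- sgn_of s)
       + (q - 1/q) * (qnum q (1/2) * qnum q (3/2) - qnum q l * qnum q (l + 1)))
     / (q * qnum q (2*l + 2))"

definition alpha_zero :: "real \<Rightarrow> bool \<Rightarrow> real \<Rightarrow> real \<Rightarrow> real" where
  "alpha_zero q s l k = (qnum q (l - k + 1) * qnum q (l + k) - q\<^sup>2 * qnum q (l - k) * qnum q (l + k + 1))
     / qnum q (2*l) * beta q s l"

text \<open>Matrix entries: mat i j = coefficient of basis vector i in (operator applied to basis vector j).\<close>
definition x0_mat :: "real \<Rightarrow> idx \<Rightarrow> idx \<Rightarrow> real" where
  "x0_mat q i j = (case i of (s', l', k') \<Rightarrow> case j of (s, l, k) \<Rightarrow>
     if s' = s \<and> k' = k then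
       (if l' = l - 1 then alpha_minus q s l k
        else if l' = l then alpha_zero q s l k
        else if l' = l + 1 then alpha_plus q s l k else 0)
     else 0)"

definition A_mat :: "real \<Rightarrow> idx \<Rightarrow> idx \<Rightarrow> real" where
  "A_mat q i j = ((if i = j then 1 else 0) - x0_mat q i j) / (1 + q\<^sup>2)"

text \<open>M = L^2 K^2, diagonal with eigenvalue q^(2l+2k).\<close>
definition M_mat :: "real \<Rightarrow> idx \<Rightarrow> idx \<Rightarrow> real" where
  "M_mat q i j = (if i = j then (case j of (s, l, k) \<Rightarrow> q powr (2*l + 2*k)) else 0)"

text \<open>A0 = (A - M) L^(-1), with L^(-1) diagonal with eigenvalue q^(-l).\<close>
definition A0_mat :: "real \<Rightarrow> idx \<Rightarrow> idx \<Rightarrow> real" where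
  "A0_mat q i j = (A_mat q i j - M_mat q i j) * q powr (- lev j)"

definition mat_apply :: "(idx \<Rightarrow> idx \<Rightarrow> real) \<Rightarrow> (idx \<Rightarrow> complex) \<Rightarrow> idx \<Rightarrow> complex" where
  "mat_apply a v i = (\<Sum>j\<in>{j. v j \<noteq> 0}. complex_of_real (a i j) * v j)"

end

theory Submission
  imports Defs
begin

lemma qnum_half:
  assumes q: "0 < q" "q < 1"
  shows "qnum q (1/2) * qnum q (3/2) = (q^2 + 1/q^2 - q - 1/q) / (q - 1/q)^2"
proof -
  define r where "r = q powr (1/2)"
  have r0: "r > 0" using q by (simp add: r_def)
  have rr: "r * r = q" using q by (simp add: r_def flip: powr_add)
  have h1: "q powr (-(1/2)) = 1/r" using q by (simp add: r_def powr_minus_divide)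
  have h2: "q powr (3/2) = q * r" proof - have "q powr (3/2) = q powr (1 + 1/2)" by simp also have "\<dots> = q powr 1 * q powr (1/2)" by (rule powr_add) finally show ?thesis using q by (simp add: r_def) qed
  have h3: "q powr (-(3/2)) = 1/(q*r)" using q h2 by (simp add: powr_minus_divide)
  have "qnum q (1/2) * qnum q (3/2) = (r - 1/r) * (q*r - 1/(q*r)) / (q - 1/q)^2"
    unfolding qnum_def using h1 h3 h2 by (simp add: r_def power2_eq_square)
  also have "\<dots> = (q^2 + 1/q^2 - q - 1/q) / (q - 1/q)^2"
  proof -
    have "(r - 1/r) * (q*r - 1/(q*r)) = q*(r*r) - 1/q - q + 1/(q*(r*r))"
      using r0 q by (simp add: field_simps)
    then show ?thesis by (simp add: rr power2_eq_square)
  qed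
  finally show ?thesis .
qed


lemma qnum_alt: "q > 0 \<Longrightarrow> q powr x = y \<Longrightarrow> qnum q x = (y - 1/y)/(q - 1/q)"
  by (simp add: qnum_def powr_minus_divide)

lemma aux: "(c::real) \<noteq> 0 \<Longrightarrow> ((A/c)*(B/c) - Q*(C/c)*(D/c)) / (E/c) = ((A*B - Q*C*D)/c^2)/(E/c)"
  by (cases "E = 0") (simp_all add: field_simps power2_eq_square)

lemma aux2: "(c::real) \<noteq> 0 \<Longrightarrow> E \<noteq> 0 \<Longrightarrow> ((K*S)/c^2)/(E/c) = (K/c)*S/E"
  by (simp add: field_simps power2_eq_square)

lemma neg_frac: "(-(q2*t4) + e*t2u2 - 1) / (t4 - 1) = (q2 * t4 - e * t2u2 + 1) / (1 - (t4::real))"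
proof -
  have "(-(q2*t4) + e*t2u2 - 1) = - (q2 * t4 - e * t2u2 + 1)" by simp
  moreover have "t4 - 1 = - (1 - t4)" by simp
  ultimately show ?thesis by (simp only: minus_divide_divide)
qed

lemma sq_powr: "(q::real) > 0 \<Longrightarrow> (q powr l)^2 = q powr (2*l)" by (simp add: powr_power)

lemma stepA:
  assumes q: "0 < q" "q < 1" and l: "l > 0"
  shows "(qnum q (l - k + 1) * qnum q (l + k) - q\<^sup>2 * qnum q (l - k) * qnum q (l + k + 1)) / qnum q (2*l)
     = (q^2 * (q powr l)^4 - (1+q^2) * (q powr l)^2 * (q powr k)^2 + 1) / (1 - (q powr l)^4)"
proof -
  define t where "t = q powr l"
  define u where "u = q powr k"
  have t0: "t > 0" and u0: "u > 0" using q by (auto simp: t_def u_def)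
  have t1: "t < 1" using powr_less_mono'[OF q l] q unfolding t_def by simp
  have a1: "qnum q (l - k + 1) = (t*q/u - 1/(t*q/u))/(q - 1/q)"
    apply (rule qnum_alt[OF q(1)]) using q by (simp add: t_def u_def powr_add powr_diff)
  have a2: "qnum q (l + k) = (t*u - 1/(t*u))/(q - 1/q)"
    apply (rule qnum_alt[OF q(1)]) using q by (simp add: t_def u_def powr_add powr_diff)
  have a3: "qnum q (l - k) = (t/u - 1/(t/u))/(q - 1/q)"
    apply (rule qnum_alt[OF q(1)]) using q by (simp add: t_def u_def powr_add powr_diff)
  have a4: "qnum q (l + k + 1) = (t*u*q - 1/(t*u*q))/(q - 1/q)"
    apply (rule qnum_alt[OF q(1)]) using q by (simp add: t_def u_def powr_add powr_diff)
  have a5: "qnum q (2*l) = (t^2 - 1/t^2)/(q - 1/q)"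
    apply (rule qnum_alt[OF q(1)]) using q by (simp add: t_def sq_powr)
  have "t*t < 1" using t0 t1 mult_strict_mono[of t 1 t 1] by simp
  then have t2: "t^2 \<noteq> 1" by (simp add: power2_eq_square)
  have qq': "q*q < 1" using q mult_strict_mono[of q 1 q 1] by simp
  have qq: "q*q \<noteq> 1" using qq' by simp
  have c0: "q - 1/q \<noteq> 0" using q qq by (simp add: field_simps)
  define c where "c = q - 1/q"
  have cq: "c = (q*q - 1)/q" using q by (simp add: c_def field_simps)
  have t4: "t^4 < 1" using t0 t1 by (simp add: power_less_one_iff)
  then have tt: "t^4 \<noteq> 1" by simp
  have kq: "(1 - q*q)/c = -q" unfolding cq using q qq by (simp add: field_simps)
  have num: "(t*q/u - 1/(t*q/u))*(t*u - 1/(t*u)) - q\<^sup>2*(t/u - 1/(t/u))*(t*u*q - 1/(t*u*q))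
      = (1 - q*q)*(q*t^2 - (1+q^2)*u^2/q + 1/(q*t^2))"
    using t0 u0 q by (simp add: field_simps power2_eq_square)
  have "(qnum q (l - k + 1) * qnum q (l + k) - q\<^sup>2 * qnum q (l - k) * qnum q (l + k + 1)) / qnum q (2*l)
      = (((t*q/u - 1/(t*q/u))*(t*u - 1/(t*u)) - q\<^sup>2*(t/u - 1/(t/u))*(t*u*q - 1/(t*u*q))) / c^2) / ((t^2 - 1/t^2)/c)"
    unfolding a1 a2 a3 a4 a5 c_def[symmetric] by (rule aux) (use c0 in \<open>simp add: c_def\<close>)
  also have "\<dots> = ((1 - q*q)*(q*t^2 - (1+q^2)*u^2/q + 1/(q*t^2)) / c^2) / ((t^2 - 1/t^2)/c)"
    unfolding num ..
  also have "\<dots> = ((1 - q*q)/c) * (q*t^2 - (1+q^2)*u^2/q + 1/(q*t^2)) / (t^2 - 1/t^2)"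
    proof (rule aux2) show "c \<noteq> 0" using c0 by (simp add: c_def) show "t^2 - 1/t^2 \<noteq> 0" using tt t0 by (simp add: field_simps) qed
  also have "\<dots> = (-q) * (q*t^2 - (1+q^2)*u^2/q + 1/(q*t^2)) / (t^2 - 1/t^2)"
    using kq by simp
  also have "\<dots> = (q^2 * t^4 - (1+q^2) * t^2 * u^2 + 1) / (1 - t^4)"
  proof -
    have e1: "(-q) * (q*t^2 - (1+q^2)*u^2/q + 1/(q*t^2)) = -(q^2*t^2) + (1+q^2)*u^2 - 1/t^2"
      using q by (simp add: field_simps power2_eq_square)
    have e2: "t^2 - 1/t^2 = (t^4 - 1)/t^2" using t0 by (simp add: field_simps power2_eq_square power4_eq_xxxx)
    have e3: "(-(q^2*t^2) + (1+q^2)*u^2 - 1/t^2) * t^2 = -(q^2*t^4) + (1+q^2)*t^2*u^2 - 1"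
      using t0 by (simp add: field_simps power2_eq_square power4_eq_xxxx)
    have "(-q) * (q*t^2 - (1+q^2)*u^2/q + 1/(q*t^2)) / (t^2 - 1/t^2)
        = (-(q^2*t^4) + (1+q^2)*t^2*u^2 - 1) / (t^4 - 1)"
      unfolding e1 e2 e3[symmetric] using t0 by simp
    also have "\<dots> = (q^2 * t^4 - (1+q^2) * t^2 * u^2 + 1) / (1 - t^4)"
      by (rule neg_frac)
    finally show ?thesis .
  qed
  finally show ?thesis unfolding t_def u_def .
qed


lemma aux3: "(c::real) \<noteq> 0 \<Longrightarrow> (a + c*(H/c^2 - X/c^2))/(q*(Y/c)) = (a*c + H - X)/(q*Y)"
  by (cases "Y = 0"; cases "q = 0") (simp_all add: field_simps power2_eq_square)

lemma stepB:
  assumes q: "0 < q" "q < 1" and l: "l > 0"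
  shows "beta q s l = (1 + q^2 * (q powr l)^4 - (if s then 1 + q^2 else 1 + 1/q^2) * q * (q powr l)^2)
              / (1 - q^4 * (q powr l)^4)"
proof -
  define t where "t = q powr l"
  have t0: "t > 0" using q by (auto simp: t_def)
  have t1: "t < 1" using powr_less_mono'[OF q l] q unfolding t_def by simp
  have qq': "q*q < 1" using q mult_strict_mono[of q 1 q 1] by simp
  have qq: "q*q \<noteq> 1" using qq' by simp
  define c where "c = q - 1/q"
  have c0: "c \<noteq> 0" using q qq by (simp add: field_simps c_def)
  have a1: "qnum q l = (t - 1/t)/c"
    unfolding c_def by (rule qnum_alt[OF q(1)]) (simp add: t_def)
  have a2: "qnum q (l+1) = (t*q - 1/(t*q))/c"
    unfolding c_def apply (rule qnum_alt[OF q(1)]) using q by (simp add: t_def powr_add)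
  have a3: "qnum q (2*l+2) = (t^2*q^2 - 1/(t^2*q^2))/c"
    unfolding c_def apply (rule qnum_alt[OF q(1)]) using q
    by (simp add: t_def powr_add sq_powr powr_realpow[where n=2, simplified])
  have h: "qnum q (1/2) * qnum q (3/2) = (q^2 + 1/q^2 - q - 1/q)/c^2"
    using qnum_half[OF q] by (simp add: c_def)
  have tq: "t*t*(q*q) < 1" using t0 t1 qq' q mult_strict_mono[of "t*t" 1 "q*q" 1]
    mult_strict_mono[of t 1 t 1] by simp
  have "beta q s l = (sgn_of s * q powr (- sgn_of s) + c * ((q^2 + 1/q^2 - q - 1/q)/c^2
          - ((t - 1/t)*(t*q - 1/(t*q)))/c^2)) / (q * ((t^2*q^2 - 1/(t^2*q^2))/c))"
    unfolding beta_def h a1 a2 a3 c_def[symmetric] by (simp add: power2_eq_square)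
  also have "\<dots> = (sgn_of s * q powr (- sgn_of s) * c + (q^2 + 1/q^2 - q - 1/q)
          - ((t - 1/t)*(t*q - 1/(t*q)))) / (q * (t^2*q^2 - 1/(t^2*q^2)))"
    by (rule aux3[OF c0])
  also have "\<dots> = (1 + q^2 * t^4 - (if s then 1 + q^2 else 1 + 1/q^2) * q * t^2) / (1 - q^4 * t^4)"
  proof -
    define d where "d = (if s then 1 + q^2 else 1 + 1/q^2)"
    have Z: "sgn_of s * q powr (- sgn_of s) * c + (q^2 + 1/q^2 - q - 1/q) - ((t - 1/t)*(t*q - 1/(t*q)))
        = d - t^2*q - 1/(t^2*q)"
      using q t0 unfolding c_def d_def
      by (cases s) (simp_all add: sgn_of_def field_simps power2_eq_square powr_minus_divide)
    have Y: "q * (t^2*q^2 - 1/(t^2*q^2)) = (t^4*q^4 - 1)/(t^2*q)"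
      using q t0 by (simp add: field_simps power2_eq_square power4_eq_xxxx)
    have Z2: "(d - t^2*q - 1/(t^2*q)) * (t^2*q) = - (1 + q^2 * t^4 - d * q * t^2)"
      using q t0 by (simp add: field_simps power2_eq_square power4_eq_xxxx)
    have W: "t^4*q^4 - 1 = - (1 - q^4 * t^4)" by simp
    have tq0: "t^2*q \<noteq> 0" using q t0 by simp
    have "(d - t^2*q - 1/(t^2*q)) / ((t^4*q^4 - 1)/(t^2*q)) = ((d - t^2*q - 1/(t^2*q)) * (t^2*q)) / (t^4*q^4 - 1)"
      using tq0 by simp
    also have "\<dots> = (1 + q^2 * t^4 - d * q * t^2) / (1 - q^4 * t^4)"
      unfolding Z2 W by (simp only: minus_divide_divide)
    finally show ?thesis unfolding Z Y d_def .
  qed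
  finally show ?thesis unfolding t_def .
qed


lemma qn_upper:
  assumes q: "0 < q" "q < 1" and x: "0 \<le> x"
  shows "0 \<le> qnum q x" "qnum q x \<le> (q/(1 - q^2)) / q powr x"
proof -
  have y0: "q powr x > 0" using q by simp
  have y1: "q powr x \<le> 1" using q x by (simp add: powr_le1)
  have qq: "q^2 < 1" using q by (simp add: power_less_one_iff)
  have e: "qnum q x = (q/(1-q^2)) * (1/q powr x - q powr x)"
    using q qq unfolding qnum_def powr_minus_divide by (simp add: field_simps power2_eq_square)
  have g0: "q/(1-q^2) > 0" using q qq by simp
  have "1/q powr x - q powr x \<ge> 0" using y0 y1 by (simp add: field_simps) (metis mult_le_one less_imp_le y0 y1)
  then show "0 \<le> qnum q x" unfolding e using g0 by (intro mult_nonneg_nonneg) auto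
  have "1/q powr x - q powr x \<le> 1 / q powr x" using y0 by simp
  then show "qnum q x \<le> (q/(1 - q^2)) / q powr x" unfolding e using g0
    by (metis mult_left_mono less_imp_le times_divide_eq_right mult.right_neutral)
qed

lemma qn_lower:
  assumes q: "0 < q" "q < 1" and x: "1/2 \<le> x"
  shows "(q/(1 - q^2)) * (1 - q) / q powr x \<le> qnum q x"
proof -
  have y0: "q powr x > 0" using q by simp
  have qq: "q^2 < 1" using q by (simp add: power_less_one_iff)
  have e: "qnum q x = (q/(1-q^2)) * (1/q powr x - q powr x)"
    using q qq unfolding qnum_def powr_minus_divide by (simp add: field_simps power2_eq_square)
  have g0: "q/(1-q^2) > 0" using q qq by simp
  have "(q powr x)^2 = q powr (2*x)" using q by (simp add: powr_realpow[symmetric] powr_powr mult.commute)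
  also have "\<dots> \<le> q powr 1" using q x by (intro powr_mono') auto
  finally have y2: "(q powr x)^2 \<le> q" using q by simp
  have "(1 - q)/q powr x \<le> 1/q powr x - q powr x"
    using y0 y2 by (simp add: field_simps power2_eq_square)
  then show ?thesis unfolding e using g0
    by (metis mult_left_mono less_imp_le times_divide_eq_right)
qed

lemma powr4: "(q::real) > 0 \<Longrightarrow> q powr a * q powr b * q powr c * q powr d = q powr (a+b+c+d)"
  by (simp only: powr_add mult.assoc)

lemma am_bound:
  assumes q: "0 < q" "q < 1"
  shows "(alpha_minus q s L k)^2 \<le> (qnum q 2)^2 / (1-q)^4 * q powr (2*L - 1)"
proof (cases "\<bar>k\<bar> > L - 1")
  case True
  have "0 \<le> (qnum q 2)^2 / (1-q)^4 * q powr (2*L - 1)" using q by simp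
  then show ?thesis using True by (simp add: alpha_minus_def)
next
  case False
  define g where "g = q/(1-q^2)"
  have qq: "q^2 < 1" using q by (simp add: power_less_one_iff)
  have g0: "g > 0" using q qq by (simp add: g_def)
  have kL: "L - k \<ge> 1" "L + k \<ge> 1" using False by auto
  define a1 where "a1 = qnum q (L - k)"
  define a2 where "a2 = qnum q (L + k)"
  define a3 where "a3 = qnum q (L - 1/2)"
  define a4 where "a4 = qnum q (L + 1/2)"
  define b1 where "b1 = qnum q (2*L - 1)"
  define b2 where "b2 = qnum q (2*L)"
  define b3 where "b3 = qnum q (2*L + 1)"
  define A where "A = q powr (k + sgn_of s / 2) * qnum q 2"
  have a1u: "0 \<le> a1" "a1 \<le> g / q powr (L-k)" using qn_upper[OF q, of "L-k"] kL by (auto simp: a1_def g_def)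
  have a2u: "0 \<le> a2" "a2 \<le> g / q powr (L+k)" using qn_upper[OF q, of "L+k"] kL by (auto simp: a2_def g_def)
  have a3u: "0 \<le> a3" "a3 \<le> g / q powr (L-1/2)" using qn_upper[OF q, of "L-1/2"] kL by (auto simp: a3_def g_def)
  have a4u: "0 \<le> a4" "a4 \<le> g / q powr (L+1/2)" using qn_upper[OF q, of "L+1/2"] kL by (auto simp: a4_def g_def)
  have b1l: "g*(1-q) / q powr (2*L-1) \<le> b1" using qn_lower[OF q, of "2*L-1"] kL by (auto simp: b1_def g_def)
  have b2l: "g*(1-q) / q powr (2*L) \<le> b2" using qn_lower[OF q, of "2*L"] kL by (auto simp: b2_def g_def)
  have b3l: "g*(1-q) / q powr (2*L+1) \<le> b3" using qn_lower[OF q, of "2*L+1"] kL by (auto simp: b3_def g_def)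
  have gq0: "g*(1-q) > 0" using g0 q by simp
  have lb: "\<And>x. g*(1-q) / q powr x > 0" using gq0 q by simp
  have b0: "b1 > 0" "b2 > 0" "b3 > 0" using lb[of "2*L-1"] lb[of "2*L"] lb[of "2*L+1"] b1l b2l b3l by linarith+
  have "(alpha_minus q s L k)^2 = (A * sqrt a1 * sqrt a2 * sqrt a3 * sqrt a4 / (sqrt b1 * b2 * sqrt b3))^2"
    using False unfolding alpha_minus_def A_def a1_def a2_def a3_def a4_def b1_def b2_def b3_def
    by (simp add: mult.assoc)
  also have "\<dots> = A^2 * (a1*a2*a3*a4) / (b1*b2^2*b3)"
    using a1u a2u a3u a4u b0 by (simp add: power_mult_distrib power_divide)
  also have "\<dots> \<le> A^2 * (g/q powr (L-k) * (g/q powr (L+k)) * (g/q powr (L-1/2)) * (g/q powr (L+1/2)))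
       / ((g*(1-q) / q powr (2*L-1)) * (g*(1-q) / q powr (2*L))^2 * (g*(1-q) / q powr (2*L+1)))"
  proof (rule frac_le)
    show "0 \<le> A^2 * (g/q powr (L-k) * (g/q powr (L+k)) * (g/q powr (L-1/2)) * (g/q powr (L+1/2)))"
      using g0 q by simp
    show "A^2 * (a1*a2*a3*a4) \<le> A^2 * (g/q powr (L-k) * (g/q powr (L+k)) * (g/q powr (L-1/2)) * (g/q powr (L+1/2)))"
      using a1u a2u a3u a4u g0 q
      by (intro mult_left_mono mult_mono) (auto intro!: mult_nonneg_nonneg)
    show "0 < (g*(1-q) / q powr (2*L-1)) * (g*(1-q) / q powr (2*L))^2 * (g*(1-q) / q powr (2*L+1))"
      using lb by (intro mult_pos_pos) auto
    show "(g*(1-q) / q powr (2*L-1)) * (g*(1-q) / q powr (2*L))^2 * (g*(1-q) / q powr (2*L+1)) \<le> b1*b2^2*b3"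
      using b1l b2l b3l lb b0 unfolding power2_eq_square
      by (intro mult_mono) (auto intro!: mult_nonneg_nonneg less_imp_le)
  qed
  also have "\<dots> = A^2 * (g^4 / (q powr (L-k) * q powr (L+k) * q powr (L-1/2) * q powr (L+1/2)))
       / ((g*(1-q))^4 / (q powr (2*L-1) * q powr (2*L) * q powr (2*L) * q powr (2*L+1)))"
    by (simp add: power2_eq_square power4_eq_xxxx)
  also have "\<dots> = A^2 * (g^4 / q powr (4*L)) / ((g*(1-q))^4 / q powr (8*L))"
    using q by (simp add: powr4)
  also have "\<dots> = A^2 * (q powr (8*L) / q powr (4*L)) / (1-q)^4"
    unfolding power_mult_distrib[of g "1-q"] using g0 q by (simp add: field_simps)
  also have "\<dots> = (qnum q 2)^2 * q powr (2*k + sgn_of s + 4*L) / (1-q)^4"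
  proof -
    have "A^2 = q powr (2*k + sgn_of s) * (qnum q 2)^2"
      unfolding A_def using q by (simp add: power_mult_distrib powr_realpow[symmetric] powr_powr algebra_simps)
    moreover have "q powr (8*L) / q powr (4*L) = q powr (4*L)" using q by (simp add: powr_diff[symmetric])
    ultimately show ?thesis using q by (simp add: powr_add mult_ac)
  qed
  also have "\<dots> \<le> (qnum q 2)^2 * q powr (2*L - 1) / (1-q)^4"
  proof -
    have "2*k + sgn_of s + 4*L \<ge> 2*L - 1" using kL by (simp add: sgn_of_def)
    then have "q powr (2*k + sgn_of s + 4*L) \<le> q powr (2*L - 1)" using q by (intro powr_mono') auto
    then show ?thesis using q by (intro divide_right_mono mult_left_mono) auto
  qed
  finally show ?thesis by simp
qed


lemma Br_bound:
  fixes q P X d :: real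
  assumes q: "0 < q" "q < 1" and P: "0 < P" "P \<le> 1" and X: "0 \<le> X" "X \<le> 1"
    and d: "0 < d" "d \<le> 1 + 1/q^2"
  shows "\<bar>(-((1+q^2)^2*P)) + d*q*(1+q^2*P^2) + (1+q^2)*P*X*(1+q^2+q^4-q^4*P^2) - (1+q^2)*d*q*X\<bar>
     \<le> (1+q^2)^2 + (1 + 1/q^2)*q*(1+q^2) + (1+q^2)*(1+q^2+2*q^4) + (1+q^2)*(1 + 1/q^2)*q"
proof -
  have P2: "P^2 \<le> 1" using P by (simp add: power_le_one)
  have q2: "q^2 \<le> 1" "0 \<le> q^2" using q by (auto simp: power_le_one)
  have q4: "q^4 \<le> 1" "0 \<le> q^4" using q by (auto simp: power_le_one)
  have t1: "\<bar>(-((1+q^2)^2*P))\<bar> \<le> (1+q^2)^2" using P by (simp add: abs_mult mult_left_le)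
  have "q^2*P^2 \<le> q^2" using P2 q2 by (simp add: mult_left_le)
  then have t2: "\<bar>d*q*(1+q^2*P^2)\<bar> \<le> (1 + 1/q^2)*q*(1+q^2)"
    using d q P by (auto simp: abs_mult intro!: mult_mono)
  have PX: "P*X \<le> 1" "0 \<le> P*X" using P X by (auto simp: mult_le_one)
  have "q^4*P^2 \<le> q^4" using P2 q4 by (simp add: mult_left_le)
  moreover have "0 \<le> q^4*P^2" by simp
  ultimately have "\<bar>1+q^2+q^4-q^4*P^2\<bar> \<le> 1+q^2+2*q^4" using q2 q4 by linarith
  then have t3: "\<bar>(1+q^2)*P*X*(1+q^2+q^4-q^4*P^2)\<bar> \<le> (1+q^2)*(1+q^2+2*q^4)"
  proof -
    have "\<bar>P*X\<bar> * \<bar>1+q^2+q^4-q^4*P^2\<bar> \<le> 1 * (1+q^2+2*q^4)"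
      using PX \<open>\<bar>1+q^2+q^4-q^4*P^2\<bar> \<le> 1+q^2+2*q^4\<close> by (intro mult_mono) auto
    moreover have "\<bar>(1+q^2)*P*X*(1+q^2+q^4-q^4*P^2)\<bar> = (1+q^2) * (\<bar>P*X\<bar> * \<bar>1+q^2+q^4-q^4*P^2\<bar>)"
      by (simp add: abs_mult mult_ac)
    ultimately show ?thesis using q2 by (simp add: mult_left_mono)
  qed
  have t4: "\<bar>(1+q^2)*d*q*X\<bar> \<le> (1+q^2)*(1 + 1/q^2)*q"
  proof -
    have "d*q*X \<le> (1 + 1/q^2)*q*1"
      using d q X by (intro mult_mono) auto
    then have "(1+q^2)*(d*q*X) \<le> (1+q^2)*((1 + 1/q^2)*q*1)" by (intro mult_left_mono) auto
    moreover have "\<bar>(1+q^2)*d*q*X\<bar> = (1+q^2)*(d*q*X)" using d q X by (simp add: abs_mult mult_ac)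
    ultimately show ?thesis by simp
  qed
  show ?thesis using t1 t2 t3 t4 by linarith
qed


lemma frac_gen:
  fixes a b e N1 N2 X Z :: real
  assumes "a \<noteq> 0" "b \<noteq> 0" "e \<noteq> 0" "a*b - N1*N2 - X*e*(a*b) = Z"
  shows "(1 - N1/a * (N2/b))/e - X = Z/(e*(a*b))"
proof -
  have "(1 - N1/a * (N2/b))/e - X = (a*b - N1*N2 - X*e*(a*b))/(e*(a*b))"
    using assms(1-3) by (simp add: field_simps)
  then show ?thesis using assms(4) by simp
qed

lemma diag_ident:
  fixes q P X d :: real
  assumes "1 - P^2 \<noteq> 0" "1 - q^4*P^2 \<noteq> 0" "q > 0"
  shows "(1 - (q^2*P^2 - (1+q^2)*X + 1)/(1-P^2) * ((1 + q^2*P^2 - d*q*P)/(1-q^4*P^2)))/(1+q^2) - X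
    = P * ((-((1+q^2)^2*P)) + d*q*(1+q^2*P^2) + (1+q^2)*P*X*(1+q^2+q^4-q^4*P^2) - (1+q^2)*d*q*X)
      / ((1+q^2) * ((1-P^2)*(1-q^4*P^2)))"
proof -
  have e: "1 + q^2 \<noteq> 0" using assms by (metis add_pos_nonneg less_numeral_extra(1) not_less_iff_gr_or_eq zero_le_power2)
  have poly: "(1-P^2)*(1-q^4*P^2) - (q^2*P^2 - (1+q^2)*X + 1) * (1 + q^2*P^2 - d*q*P) - X*(1+q^2)*((1-P^2)*(1-q^4*P^2))
     = P * ((-((1+q^2)^2*P)) + d*q*(1+q^2*P^2) + (1+q^2)*P*X*(1+q^2+q^4-q^4*P^2) - (1+q^2)*d*q*X)"
    by algebra
  show ?thesis by (rule frac_gen[OF assms(1,2) e poly])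
qed

definition KD :: "real \<Rightarrow> real" where
  "KD q = ((1+q^2)^2 + (1 + 1/q^2)*q*(1+q^2) + (1+q^2)*(1+q^2+2*q^4) + (1+q^2)*(1 + 1/q^2)*q)
     / ((1+q^2)*(1-q^2)^2)"

lemma diag_bound:
  assumes q: "0 < q" "q < 1" and l: "1/2 \<le> l" and k: "-l \<le> k"
  shows "\<bar>((1 - alpha_zero q s l k)/(1+q^2) - q powr (2*l+2*k)) * q powr (-l)\<bar> \<le> KD q"
proof -
  define t where "t = q powr l"
  define u where "u = q powr k"
  define P where "P = t^2"
  define X where "X = P * u^2"
  define d where "d = (if s then 1 + q^2 else 1 + 1/q^2)"
  have l0: "l > 0" using l by simp
  have t0: "t > 0" and u0: "u > 0" using q by (auto simp: t_def u_def)
  have P0: "P > 0" using t0 by (simp add: P_def)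
  have Pq: "P \<le> q" unfolding P_def t_def using q l by (simp add: sq_powr) (metis powr_mono' powr_one less_imp_le mult.commute le_divide_eq_numeral1(1) mult_2 order_refl  less_eq_real_def)
  have X0: "0 \<le> X" using P0 by (simp add: X_def)
  have Xeq: "X = q powr (2*l+2*k)" unfolding X_def P_def t_def u_def using q by (simp add: sq_powr powr_add)
  have X1: "X \<le> 1" unfolding Xeq using q k by (intro powr_le1) auto
  have q2: "q^2 < 1" using q by (simp add: power_less_one_iff)
  have P2: "P^2 \<le> q^2" using Pq P0 by (simp add: power_mono)
  have P2': "P^2 < 1" using P2 q2 by simp
  have q4: "q^4 \<le> 1" using q by (simp add: power_le_one)
  have qP: "q^4*P^2 \<le> q^2" using q4 P2 P0 by (metis mult_le_one mult_right_mono zero_le_power2 mult_1 order_trans)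
  have D1: "1 - P^2 \<ge> 1 - q^2" using P2 by simp
  have D2: "1 - q^4*P^2 \<ge> 1 - q^2" using qP by simp
  have qp: "q^2 > 0" using q by simp
  have iq: "1 \<le> 1/q^2" using q2 qp by (simp add: field_simps)
  have d0: "0 < d" "d \<le> 1 + 1/q^2"
  proof -
    have "1 + q^2 \<le> 1 + 1/q^2" using q2 iq by linarith
    moreover have "0 < 1 + 1/q^2" using qp by (simp add: add_pos_nonneg)
    moreover have "0 < 1 + q^2" using qp by linarith
    ultimately show "0 < d" "d \<le> 1 + 1/q^2" by (auto simp: d_def)
  qed
  have az: "alpha_zero q s l k = (q^2*P^2 - (1+q^2)*X + 1)/(1-P^2) * ((1 + q^2*P^2 - d*q*P)/(1-q^4*P^2))"
    unfolding alpha_zero_def stepA[OF q l0] stepB[OF q l0] t_def[symmetric] u_def[symmetric] d_def P_def X_def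
    by (simp add: power2_eq_square power4_eq_xxxx mult_ac)
  have e0: "1 + q^2 > 0" using qp by linarith
  have Dpos: "(1-q^2)^2 \<le> (1-P^2)*(1-q^4*P^2)" unfolding power2_eq_square[of "1-q^2"]
    using D1 D2 q2 by (intro mult_mono) auto
  have D0: "(1-q^2)^2 > 0" using q2 by simp
  define Br where "Br = (-((1+q^2)^2*P)) + d*q*(1+q^2*P^2) + (1+q^2)*P*X*(1+q^2+q^4-q^4*P^2) - (1+q^2)*d*q*X"
  define K where "K = (1+q^2)^2 + (1 + 1/q^2)*q*(1+q^2) + (1+q^2)*(1+q^2+2*q^4) + (1+q^2)*(1 + 1/q^2)*q"
  have Bb: "\<bar>Br\<bar> \<le> K" unfolding Br_def K_def
    by (rule Br_bound[OF q P0 _ X0 X1 d0]) (use Pq q in simp)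
  have id: "(1 - alpha_zero q s l k)/(1+q^2) - q powr (2*l+2*k) = P * Br / ((1+q^2) * ((1-P^2)*(1-q^4*P^2)))"
    unfolding az Xeq[symmetric] Br_def by (rule diag_ident) (use P2' qP q2 q in auto)
  have tinv: "q powr (-l) = 1/t" using q by (simp add: t_def powr_minus_divide)
  have t1: "t \<le> 1" using q l0 unfolding t_def by (intro powr_le1) auto
  have "\<bar>((1 - alpha_zero q s l k)/(1+q^2) - q powr (2*l+2*k)) * q powr (-l)\<bar>
       = t * \<bar>Br\<bar> / ((1+q^2) * ((1-P^2)*(1-q^4*P^2)))"
  proof -
    define Den where "Den = (1+q^2) * ((1-P^2)*(1-q^4*P^2))"
    have Dp: "Den > 0" unfolding Den_def
    proof -
      have "0 < (1-P^2)*(1-q^4*P^2)" using Dpos D0 by linarith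
      then show "0 < (1+q^2) * ((1-P^2)*(1-q^4*P^2))" by (rule mult_pos_pos[OF e0])
    qed
    have "\<bar>P * Br / Den * (1/t)\<bar> = P * \<bar>Br\<bar> / Den * (1/t)"
      using Dp P0 t0 by (simp add: abs_mult abs_divide)
    also have "\<dots> = t * \<bar>Br\<bar> / Den"
      using t0 by (simp add: P_def power2_eq_square)
    finally show ?thesis unfolding id tinv Den_def .
  qed
  also have "\<dots> \<le> 1 * K / ((1+q^2) * (1-q^2)^2)"
    using t1 t0 Bb e0 Dpos D0 by (intro frac_le mult_mono mult_left_mono) auto
  also have "\<dots> = KD q" by (simp add: KD_def K_def)
  finally show ?thesis .
qed


lemma off_bound:
  assumes q: "0 < q" "q < 1" and L: "l \<le> L"
  shows "((-(alpha_minus q s L k))/(1+q^2) * q powr (-l))^2 \<le> (qnum q 2)^2 / (1-q)^4 * q powr (-1)"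
proof -
  define a where "a = alpha_minus q s L k"
  define Km where "Km = (qnum q 2)^2 / (1-q)^4"
  have Km0: "Km \<ge> 0" by (simp add: Km_def)
  have e1: "1 \<le> (1+q^2)^2" using q by (simp add: power2_eq_square algebra_simps)
  have "((-a)/(1+q^2) * q powr (-l))^2 = a^2 / (1+q^2)^2 * q powr (-2*l)"
  proof -
    have p: "(q powr (-l))^2 = q powr (-2*l)" using sq_powr[OF q(1), of "-l"] by simp
    have "((-a)/(1+q^2) * q powr (-l))^2 = ((-a)/(1+q^2))^2 * (q powr (-l))^2" by (rule power_mult_distrib)
    also have "\<dots> = a^2/(1+q^2)^2 * q powr (-2*l)" unfolding p by (simp add: power_divide)
    finally show ?thesis .
  qed
  also have "\<dots> \<le> a^2 * q powr (-2*l)"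
  proof -
    have "a^2 / (1+q^2)^2 \<le> a^2 / 1" proof (rule divide_left_mono)
      show "0 < (1+q^2)^2 * 1" using e1 by linarith
    qed (use e1 in auto)
    then have "a^2 / (1+q^2)^2 \<le> a^2" by simp
    then show ?thesis by (intro mult_right_mono) auto
  qed
  also have "\<dots> \<le> Km * q powr (2*L - 1) * q powr (-2*l)"
    using am_bound[OF q, of s L k] unfolding a_def Km_def by (intro mult_right_mono) auto
  also have "\<dots> = Km * q powr (2*L - 1 - 2*l)" using q by (simp add: powr_add[symmetric] mult.assoc)
  also have "\<dots> \<le> Km * q powr (-1)"
    using q L Km0 by (intro mult_left_mono powr_mono') auto
  finally show ?thesis unfolding a_def Km_def .
qed

definition EB :: "real \<Rightarrow> real" where
  "EB q = (qnum q 2)^2 / (1-q)^4 * q powr (-1) + (KD q)^2"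

lemma valid_facts:
  assumes "valid_idx (s, l, k)"
  shows "1/2 \<le> l" "-l \<le> k" "\<exists>n::nat. l = real n + 1/2"
  using assms by (auto simp: valid_idx_def)

lemma entry_bound:
  assumes q: "0 < q" "q < 1" and v: "valid_idx j"
  shows "(A0_mat q i j)^2 \<le> EB q"
proof -
  obtain s l k where j: "j = (s, l, k)" by (cases j) auto
  obtain s' l' k' where i: "i = (s', l', k')" by (cases i) auto
  have l: "1/2 \<le> l" and k: "-l \<le> k" using valid_facts[OF v[unfolded j]] by auto
  define Km where "Km = (qnum q 2)^2 / (1-q)^4 * q powr (-1)"
  have Km0: "0 \<le> Km" using q by (simp add: Km_def)
  have EB: "EB q = Km + (KD q)^2" by (simp add: EB_def Km_def)
  consider (a) "s' = s \<and> k' = k \<and> l' = l - 1" | (b) "s' = s \<and> k' = k \<and> l' = l"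
    | (c) "s' = s \<and> k' = k \<and> l' = l + 1"
    | (d) "\<not> (s' = s \<and> k' = k \<and> (l' = l - 1 \<or> l' = l \<or> l' = l + 1))" by blast
  then show ?thesis
  proof cases
    case a
    then have "A0_mat q i j = (-(alpha_minus q s l k))/(1+q^2) * q powr (-l)"
      by (simp add: i j A0_mat_def A_mat_def M_mat_def x0_mat_def lev_def)
    then have "(A0_mat q i j)^2 \<le> Km" using off_bound[OF q, of l l s k] by (simp add: Km_def)
    then show ?thesis unfolding EB using zero_le_power2[of "KD q"] by linarith
  next
    case b
    then have "A0_mat q i j = ((1 - alpha_zero q s l k)/(1+q^2) - q powr (2*l+2*k)) * q powr (-l)"
      by (simp add: i j A0_mat_def A_mat_def M_mat_def x0_mat_def lev_def diff_divide_distrib)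
    then have "\<bar>A0_mat q i j\<bar> \<le> KD q" using diag_bound[OF q l k, of s] by simp
    then have "(A0_mat q i j)^2 \<le> (KD q)^2" by (metis abs_ge_zero order_trans power2_abs power_mono)
    then show ?thesis unfolding EB using Km0 by simp
  next
    case c
    then have "A0_mat q i j = (-(alpha_minus q s (l+1) k))/(1+q^2) * q powr (-l)"
      by (simp add: i j A0_mat_def A_mat_def M_mat_def x0_mat_def lev_def alpha_plus_def)
    then have "(A0_mat q i j)^2 \<le> Km" using off_bound[OF q, of l "l+1" s k] by (simp add: Km_def)
    then show ?thesis unfolding EB using zero_le_power2[of "KD q"] by linarith
  next
    case d
    then have "A0_mat q i j = 0"
      by (auto simp: i j A0_mat_def A_mat_def M_mat_def x0_mat_def lev_def)
    then show ?thesis unfolding EB using Km0 by simp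
  qed
qed


definition sh :: "real \<Rightarrow> idx \<Rightarrow> idx" where
  "sh d i = (case i of (s, l, k) \<Rightarrow> (s, l + d, k))"

lemma inj_sh: "inj (sh d)"
  by (auto simp: inj_def sh_def split: prod.splits)

lemma A0_zero:
  assumes "j \<notin> {sh 1 i, i, sh (-1) i}"
  shows "A0_mat q i j = 0"
proof -
  obtain s l k where j: "j = (s, l, k)" by (cases j) auto
  obtain s' l' k' where i: "i = (s', l', k')" by (cases i) auto
  have "\<not> (s' = s \<and> k' = k \<and> (l' = l - 1 \<or> l' = l \<or> l' = l + 1))"
    using assms by (auto simp: i j sh_def)
  then show ?thesis by (auto simp: i j A0_mat_def A_mat_def M_mat_def x0_mat_def lev_def)
qed

lemma sh_distinct: "sh 1 i \<noteq> i" "sh (-1) i \<noteq> i" "sh 1 i \<noteq> sh (-1) i"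
  by (auto simp: sh_def split: prod.splits)

lemma row_decomp:
  assumes F: "finite {j. v j \<noteq> 0}"
  shows "mat_apply (A0_mat q) v i =
     complex_of_real (A0_mat q i (sh 1 i)) * v (sh 1 i) + complex_of_real (A0_mat q i i) * v i
     + complex_of_real (A0_mat q i (sh (-1) i)) * v (sh (-1) i)"
proof -
  define f where "f j = complex_of_real (A0_mat q i j) * v j" for j
  define T where "T = {sh 1 i, i, sh (-1) i}"
  define F' where "F' = {j. v j \<noteq> 0}"
  have fT: "finite T" by (simp add: T_def)
  have "mat_apply (A0_mat q) v i = sum f F'" by (simp add: mat_apply_def f_def F'_def)
  also have "\<dots> = sum f (F' \<union> T)"
    by (rule sum.mono_neutral_left) (use F fT in \<open>auto simp: F'_def f_def\<close>)
  also have "\<dots> = sum f T"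
  proof (rule sum.mono_neutral_right)
    show "finite (F' \<union> T)" using F fT by (simp add: F'_def)
    show "T \<subseteq> F' \<union> T" by auto
    show "\<forall>j\<in>F' \<union> T - T. f j = 0"
    proof
      fix j assume "j \<in> F' \<union> T - T"
      then have "j \<notin> {sh 1 i, i, sh (-1) i}" by (simp add: T_def)
      then show "f j = 0" by (simp add: f_def A0_zero)
    qed
  qed
  also have "\<dots> = f (sh 1 i) + f i + f (sh (-1) i)"
    using sh_distinct[of i] by (simp add: T_def add.assoc)
  finally show ?thesis by (simp add: f_def)
qed

lemma three_sq: "(cmod (x + y + z))^2 \<le> 3 * ((cmod x)^2 + (cmod y)^2 + (cmod z)^2)"
proof -
  have "cmod (x + y + z) \<le> cmod x + cmod y + cmod z" by (metis norm_triangle_ineq add_right_mono order_trans)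
  then have "(cmod (x + y + z))^2 \<le> (cmod x + cmod y + cmod z)^2" by (simp add: power_mono)
  also have "\<dots> \<le> 3 * ((cmod x)^2 + (cmod y)^2 + (cmod z)^2)"
    using sum_squares_ge_zero by (smt (verit) power2_diff power2_sum zero_le_power2)
  finally show ?thesis .
qed

lemma term_bound:
  assumes q: "0 < q" "q < 1" and V: "{j. v j \<noteq> 0} \<subseteq> {j. valid_idx j}"
  shows "(cmod (complex_of_real (A0_mat q i j) * v j))^2 \<le> EB q * (cmod (v j))^2"
proof (cases "v j = 0")
  case True then show ?thesis by simp
next
  case False
  then have "valid_idx j" using V by auto
  then have "(A0_mat q i j)^2 \<le> EB q" by (rule entry_bound[OF q])
  then show ?thesis by (simp add: norm_mult power_mult_distrib mult_right_mono)
qed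

lemma shift_sum:
  assumes F: "finite {j. v j \<noteq> 0}" and S: "finite S"
  shows "(\<Sum>i\<in>S. (cmod (v (sh d i)))^2) \<le> (\<Sum>j\<in>{j. v j \<noteq> 0}. (cmod (v j))^2)"
proof -
  define h where "h j = (cmod (v j))^2" for j
  define F' where "F' = {j. v j \<noteq> 0}"
  have "(\<Sum>i\<in>S. h (sh d i)) = sum h (sh d ` S)"
    using sum.reindex[OF inj_on_subset[OF inj_sh[of d] subset_UNIV[of S]], where g=h] by simp
  also have "\<dots> \<le> sum h (sh d ` S \<union> F')"
    by (rule sum_mono2) (use S F in \<open>auto simp: h_def F'_def\<close>)
  also have "\<dots> = sum h F'"
    by (rule sum.mono_neutral_right) (use S F in \<open>auto simp: h_def F'_def\<close>)
  finally show ?thesis by (simp add: h_def F'_def)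
qed

theorem lemma3p4:
  fixes q :: real
  assumes "0 < q" and "q < 1"
  shows "\<exists>C::real. \<forall>v :: idx \<Rightarrow> complex.
           finite {j. v j \<noteq> 0} \<and> {j. v j \<noteq> 0} \<subseteq> {j. valid_idx j} \<longrightarrow>
           (\<forall>S. finite S \<and> S \<subseteq> {i. valid_idx i} \<longrightarrow>
              (\<Sum>i\<in>S. (cmod (mat_apply (A0_mat q) v i))\<^sup>2)
                \<le> C\<^sup>2 * (\<Sum>j\<in>{j. v j \<noteq> 0}. (cmod (v j))\<^sup>2))"
proof (intro exI[of _ "3 * sqrt (EB q)"] allI impI, elim conjE)
  fix v :: "idx \<Rightarrow> complex" and S :: "idx set"
  assume F: "finite {j. v j \<noteq> 0}" and V: "{j. v j \<noteq> 0} \<subseteq> {j. valid_idx j}"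
    and S: "finite S" and SV: "S \<subseteq> {i. valid_idx i}"
  have q: "0 < q" "q < 1" by fact+
  have EB0: "0 \<le> EB q" by (rule order_trans[OF zero_le_power2 entry_bound[OF q, of "(True, 1/2, 1/2)" "(True, 1/2, 1/2)"]]) (simp add: valid_idx_def)
  define N where "N = (\<Sum>j\<in>{j. v j \<noteq> 0}. (cmod (v j))^2)"
  have "(\<Sum>i\<in>S. (cmod (mat_apply (A0_mat q) v i))\<^sup>2)
      \<le> (\<Sum>i\<in>S. 3 * (EB q * (cmod (v (sh 1 i)))^2 + EB q * (cmod (v (sh 0 i)))^2 + EB q * (cmod (v (sh (-1) i)))^2))"
  proof (rule sum_mono)
    fix i assume "i \<in> S"
    have si: "sh 0 i = i" by (simp add: sh_def split: prod.splits)
    show "(cmod (mat_apply (A0_mat q) v i))\<^sup>2 \<le> 3 * (EB q * (cmod (v (sh 1 i)))^2 + EB q * (cmod (v (sh 0 i)))^2 + EB q * (cmod (v (sh (-1) i)))^2)"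
      unfolding row_decomp[OF F] si
      using three_sq term_bound[OF q V, of i "sh 1 i"] term_bound[OF q V, of i i] term_bound[OF q V, of i "sh (-1) i"]
      by (smt (verit) three_sq)
  qed
  also have "\<dots> = 3 * EB q * ((\<Sum>i\<in>S. (cmod (v (sh 1 i)))^2) + (\<Sum>i\<in>S. (cmod (v (sh 0 i)))^2) + (\<Sum>i\<in>S. (cmod (v (sh (-1) i)))^2))"
    by (simp add: sum.distrib sum_distrib_left algebra_simps)
  also have "\<dots> \<le> 3 * EB q * (N + N + N)"
    using shift_sum[OF F S, of 1] shift_sum[OF F S, of 0] shift_sum[OF F S, of "-1"] EB0 unfolding N_def by (intro mult_left_mono add_mono) auto
  also have "\<dots> = (3 * sqrt (EB q))\<^sup>2 * N" using EB0 by (simp add: power_mult_distrib)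
  finally show "(\<Sum>i\<in>S. (cmod (mat_apply (A0_mat q) v i))\<^sup>2) \<le> (3 * sqrt (EB q))\<^sup>2 * (\<Sum>j\<in>{j. v j \<noteq> 0}. (cmod (v j))\<^sup>2)"
    unfolding N_def .
qed


end
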